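(* Let $a\ge1$ be an integer, let $t_{d-a},\ldots,t_d\in\mathbb{C}^*$, and let $P(Y)=\sum_{l=0}^d p_lY^l\in R[Y]$ be an $m$-triangular polynomial of degree $d$ for some integer $m\ge 1$. Then the map $\mathbb{C}^a\times\mathbb{C}^*\to\mathbb{C}^a\times\mathbb{C}^*$, $x\mapsto (t_{d-a}p_{d-a}(x),\ldots,t_dp_d(x))$, is surjective.
   Context: Fix a positive integer $a$ and variables $u_0,\ldots,u_a$. Let $R=\mathbb{C}[u_0,\ldots,u_{a-1}][u_a,u_a^{-1}]$ and $U(Y)=\sum_{j=0}^a u_jY^j\in R[Y]$. For $r\in R$ and $x=(x_0,\ldots,x_a)\in\mathbb{C}^a\times\mathbb{C}^*$, $r(x)\in\mathbb{C}$ denotes the evaluation of $r$ at $u_i=x_i$. $\mathbb{Q}_+$ denotes the positive rational numbers. For an integer $m\ge1$, a polynomial $P(Y)=\sum_{l=0}^dp_lY^l\in R[Y]$ of degree $d\ge a$ is called $m$-triangular (or $(m,U)$-triangular) if for every $l$ with $d-a\le l\le d$ one has $p_l=q_lu_a^{m-1}u_{a-d+l}+P_l(u_{a-d+l+1},\ldots,u_a)$ for some $q_l\in\mathbb{Q}_+$ and some polynomial $P_l\in\mathbb{C}[u_{a-d+l+1},\ldots,u_a]$ (for $l=d$ this means $p_d=q_du_a^m$). *)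

theory Defs
  imports Complex_Main
begin

text \<open>Points of C^a x C^* are modelled as functions x :: nat => complex, where
  x i is the value of u_i (only indices 0..a matter); the domain condition is x a ~= 0.
  Elements of R are modelled by the functions they induce on such points.\<close>

inductive_set poly_fun :: "nat set \<Rightarrow> ((nat \<Rightarrow> complex) \<Rightarrow> complex) set"
  for V :: "nat set" where
  pconst: "(\<lambda>_. c) \<in> poly_fun V"
| pvar: "i \<in> V \<Longrightarrow> (\<lambda>x. x i) \<in> poly_fun V"
| padd: "f \<in> poly_fun V \<Longrightarrow> g \<in> poly_fun V \<Longrightarrow> (\<lambda>x. f x + g x) \<in> poly_fun V"
| pmult: "f \<in> poly_fun V \<Longrightarrow> g \<in> poly_fun V \<Longrightarrow> (\<lambda>x. f x * g x) \<in> poly_fun V"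

text \<open>Functions given by elements of R = C[u_0,...,u_(a-1)][u_a, u_a^-1].\<close>
inductive_set laurent_fun :: "nat \<Rightarrow> ((nat \<Rightarrow> complex) \<Rightarrow> complex) set"
  for a :: nat where
  lconst: "(\<lambda>_. c) \<in> laurent_fun a"
| lvar: "i \<le> a \<Longrightarrow> (\<lambda>x. x i) \<in> laurent_fun a"
| linv: "(\<lambda>x. inverse (x a)) \<in> laurent_fun a"
| ladd: "f \<in> laurent_fun a \<Longrightarrow> g \<in> laurent_fun a \<Longrightarrow> (\<lambda>x. f x + g x) \<in> laurent_fun a"
| lmult: "f \<in> laurent_fun a \<Longrightarrow> g \<in> laurent_fun a \<Longrightarrow> (\<lambda>x. f x * g x) \<in> laurent_fun a"

text \<open>P(Y) = sum_l p l Y^l is a polynomial in R[Y] of degree d, given by its coefficient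
  sequence p; equalities in R are checked on the domain x a ~= 0.\<close>
definition R_poly_of_degree :: "nat \<Rightarrow> nat \<Rightarrow> (nat \<Rightarrow> (nat \<Rightarrow> complex) \<Rightarrow> complex) \<Rightarrow> bool" where
  "R_poly_of_degree a d p \<longleftrightarrow>
     (\<forall>l. p l \<in> laurent_fun a) \<and>
     (\<forall>l>d. \<forall>x. x a \<noteq> 0 \<longrightarrow> p l x = 0) \<and>
     (\<exists>x. x a \<noteq> 0 \<and> p d x \<noteq> 0)"

text \<open>(m,U)-triangular polynomial of degree d (with d >= a).  Note a-d+l = l+a-d.\<close>
definition triangular :: "nat \<Rightarrow> nat \<Rightarrow> nat \<Rightarrow> (nat \<Rightarrow> (nat \<Rightarrow> complex) \<Rightarrow> complex) \<Rightarrow> bool" where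
  "triangular a m d p \<longleftrightarrow>
     m \<ge> 1 \<and> d \<ge> a \<and> R_poly_of_degree a d p \<and>
     (\<exists>q::rat. q > 0 \<and> (\<forall>x. x a \<noteq> 0 \<longrightarrow> p d x = of_rat q * x a ^ m)) \<and>
     (\<forall>l. d - a \<le> l \<and> l < d \<longrightarrow>
        (\<exists>q::rat. q > 0 \<and> (\<exists>Pl \<in> poly_fun {l + a - d + 1..a}.
            \<forall>x. x a \<noteq> 0 \<longrightarrow> p l x = of_rat q * x a ^ (m - 1) * x (l + a - d) + Pl x)))"

end

theory Submission
  imports Defs
begin

lemma croot_ex:
  fixes c :: complex assumes "c \<noteq> 0" "n > 0"
  shows "\<exists>z. z ^ n = c"
proof -
  have "(root n (norm c) * cis (Arg c / n)) * 1 \<in> {z. z ^ n = c}"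
    using bij_betw_apply[OF bij_betw_nth_root_unity[OF assms], of 1] by simp
  thus ?thesis by blast
qed

lemma poly_fun_local:
  assumes "f \<in> poly_fun V" "\<forall>i\<in>V. x i = x' i"
  shows "f x = f x'"
  using assms by (induction rule: poly_fun.induct) auto

theorem mainTheorem2:
  fixes a m d :: nat
    and p :: "nat \<Rightarrow> (nat \<Rightarrow> complex) \<Rightarrow> complex"
    and t :: "nat \<Rightarrow> complex"
  assumes "a \<ge> 1"
    and "triangular a m d p"
    and "\<forall>l. d - a \<le> l \<and> l \<le> d \<longrightarrow> t l \<noteq> 0"
  shows "\<forall>y :: nat \<Rightarrow> complex. y a \<noteq> 0 \<longrightarrow>
           (\<exists>x :: nat \<Rightarrow> complex. x a \<noteq> 0 \<and> (\<forall>i>a. x i = 0) \<and>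
              (\<forall>i\<le>a. t (d - a + i) * p (d - a + i) x = y i))"
proof (intro allI impI)
  fix y :: "nat \<Rightarrow> complex" assume ya: "y a \<noteq> 0"
  from assms(2) have m: "m \<ge> 1" and da: "d \<ge> a" and
    top: "\<exists>q::rat. q > 0 \<and> (\<forall>x. x a \<noteq> 0 \<longrightarrow> p d x = of_rat q * x a ^ m)" and
    low: "\<And>l. d - a \<le> l \<Longrightarrow> l < d \<Longrightarrow>
        (\<exists>q::rat. q > 0 \<and> (\<exists>Pl \<in> poly_fun {l + a - d + 1..a}.
            \<forall>x. x a \<noteq> 0 \<longrightarrow> p l x = of_rat q * x a ^ (m - 1) * x (l + a - d) + Pl x))"
    unfolding triangular_def by auto
  obtain q where q: "q > 0" "\<And>x. x a \<noteq> 0 \<Longrightarrow> p d x = of_rat q * x a ^ m" using top by blast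
  have td: "t d \<noteq> 0" using assms(3) by auto
  have qn: "(of_rat q :: complex) \<noteq> 0" using q by simp
  obtain r where r: "r ^ m = y a / (t d * of_rat q)"
    using croot_ex[of "y a / (t d * of_rat q)" m] ya td qn m by auto
  have r0: "r \<noteq> 0" using r ya td qn m by (cases m) auto
  have "\<exists>x. x a \<noteq> 0 \<and> (\<forall>i>a. x i = 0) \<and>
              (\<forall>i. a - k \<le> i \<and> i \<le> a \<longrightarrow> t (d - a + i) * p (d - a + i) x = y i)"
    if "k \<le> a" for k
    using that
  proof (induction k)
    case 0
    define x where "x = (\<lambda>i. if i = a then r else 0::complex)"
    have "t d * p d x = y a" using q(2)[of x] r r0 td qn by (simp add: x_def)
    hence "\<forall>i. a - 0 \<le> i \<and> i \<le> a \<longrightarrow> t (d - a + i) * p (d - a + i) x = y i"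
      using da by auto
    moreover have "x a \<noteq> 0" "\<forall>i>a. x i = 0" using r0 by (auto simp: x_def)
    ultimately show ?case by blast
  next
    case (Suc k)
    then obtain x where x: "x a \<noteq> 0" "\<forall>i>a. x i = 0"
      "\<forall>i. a - k \<le> i \<and> i \<le> a \<longrightarrow> t (d - a + i) * p (d - a + i) x = y i" by auto
    define j where "j = a - Suc k"
    have ja: "j < a" and jk: "a - k = Suc j" using Suc.prems by (auto simp: j_def)
    define l where "l = d - a + j"
    have l1: "d - a \<le> l" "l < d" "l + a - d = j" using ja da by (auto simp: l_def)
    obtain ql Pl where ql: "ql > 0" "Pl \<in> poly_fun {j + 1..a}"
      "\<And>x. x a \<noteq> 0 \<Longrightarrow> p l x = of_rat ql * x a ^ (m - 1) * x j + Pl x"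
      using low[OF l1(1,2)] l1(3) by auto
    have tl: "t l \<noteq> 0" using assms(3) l1 by auto
    have qln: "(of_rat ql :: complex) \<noteq> 0" using ql by simp
    define c where "c = (y j / t l - Pl x) / (of_rat ql * x a ^ (m - 1))"
    define x' where "x' = x(j := c)"
    have x'a: "x' a = x a" using ja by (simp add: x'_def)
    have Ploc: "Pl x' = Pl x"
      by (rule poly_fun_local[OF ql(2)]) (auto simp: x'_def)
    have eqj: "t (d - a + j) * p (d - a + j) x' = y j"
    proof -
      have "p l x' = of_rat ql * x a ^ (m - 1) * c + Pl x"
        using ql(3)[of x'] x'a Ploc x(1) by (simp add: x'_def)
      also have "\<dots> = y j / t l" using qln x(1) by (simp add: c_def)
      finally show ?thesis using tl by (simp add: l_def)
    qed
    have rest: "t (d - a + i) * p (d - a + i) x' = y i" if i: "Suc j \<le> i" "i \<le> a" for i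
    proof (cases "i = a")
      case True
      have "p d x' = p d x" using q(2)[of x'] q(2)[of x] x'a x(1) by simp
      moreover have "d - a + i = d" using True da by simp
      moreover have "t (d - a + a) * p (d - a + a) x = y a" using x(3) jk by simp
      ultimately show ?thesis using True da by simp
    next
      case False
      define l' where "l' = d - a + i"
      have l2: "d - a \<le> l'" "l' < d" "l' + a - d = i" using i False da by (auto simp: l'_def)
      obtain q' P' where q': "P' \<in> poly_fun {i + 1..a}"
        "\<And>x. x a \<noteq> 0 \<Longrightarrow> p l' x = of_rat q' * x a ^ (m - 1) * x i + P' x"
        using low[OF l2(1,2)] l2(3) by auto
      have "P' x' = P' x" by (rule poly_fun_local[OF q'(1)]) (use i in \<open>auto simp: x'_def\<close>)
      moreover have "x' i = x i" using i by (simp add: x'_def)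
      ultimately have "p l' x' = p l' x" using q'(2)[of x'] q'(2)[of x] x'a x(1) by simp
      thus ?thesis using x(3) i jk by (simp add: l'_def)
    qed
    have A: "x' a \<noteq> 0" using x'a x(1) by simp
    have B: "\<forall>i>a. x' i = 0" using x(2) ja by (simp add: x'_def)
    have C: "\<forall>i. a - Suc k \<le> i \<and> i \<le> a \<longrightarrow> t (d - a + i) * p (d - a + i) x' = y i"
    proof (intro allI impI)
      fix i assume "a - Suc k \<le> i \<and> i \<le> a"
      hence "i = j \<or> (Suc j \<le> i \<and> i \<le> a)" by (auto simp: j_def)
      thus "t (d - a + i) * p (d - a + i) x' = y i" using eqj rest by blast
    qed
    show ?case using A B C by blast
  qed
  note main = this
  from main[of a] show "\<exists>x. x a \<noteq> 0 \<and> (\<forall>i>a. x i = 0) \<and> (\<forall>i\<le>a. t (d - a + i) * p (d - a + i) x = y i)"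
    by auto
qed

end
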